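(* Let $\mathcal{A}$ be an abelian category with an amplitude $\alpha$. Then for all $A,B\in\operatorname{ob}\mathcal{A}$, \[ |\alpha(A)-\alpha(B)|\le\mathrm{d}_\alpha(A,B), \] i.e. $\alpha$ is $1$-Lipschitz with respect to the path metric $\mathrm{d}_\alpha$.
   Context: An amplitude on an abelian category $\mathcal{A}$ is a function $\alpha\colon\operatorname{ob}\mathcal{A}\to[0,\infty]$ with $\alpha(0)=0$ such that for every short exact sequence $0\to A\to B\to C\to0$, $\alpha(A)\le\alpha(B)$, $\alpha(C)\le\alpha(B)$ and $\alpha(B)\le\alpha(A)+\alpha(C)$. The cost of a zigzag $A\xleftarrow{\gamma_1}C_1\xrightarrow{\gamma_2}\cdots\xleftarrow{\gamma_{n-1}}C_n\xrightarrow{\gamma_n}B$ is $\sum_i\alpha(\ker\gamma_i)+\alpha(\operatorname{coker}\gamma_i)$; the path metric $\mathrm{d}_\alpha(A,B)$ is the infimum of costs over all zigzags between $A$ and $B$ ($\inf\emptyset=\infty$). *)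

theory Defs
  imports "HOL-Library.Extended_Real"
begin

text \<open>A category whose objects are all elements of type 'o and whose morphisms are all
  elements of type 'm, with domain, codomain, identities and composition
  (ccomp C g f is g after f, meaningful when ccod C f = cdom C g).\<close>

record ('o, 'm) cat =
  cdom  :: "'m \<Rightarrow> 'o"
  ccod  :: "'m \<Rightarrow> 'o"
  cid   :: "'o \<Rightarrow> 'm"
  ccomp :: "'m \<Rightarrow> 'm \<Rightarrow> 'm"

definition category :: "('o, 'm) cat \<Rightarrow> bool" where
  "category C \<longleftrightarrow>
     (\<forall>a. cdom C (cid C a) = a \<and> ccod C (cid C a) = a) \<and>
     (\<forall>f g. cdom C g = ccod C f \<longrightarrow>
        cdom C (ccomp C g f) = cdom C f \<and> ccod C (ccomp C g f) = ccod C g) \<and>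
     (\<forall>f. ccomp C f (cid C (cdom C f)) = f \<and> ccomp C (cid C (ccod C f)) f = f) \<and>
     (\<forall>f g h. cdom C g = ccod C f \<and> cdom C h = ccod C g \<longrightarrow>
        ccomp C h (ccomp C g f) = ccomp C (ccomp C h g) f)"

definition is_zero_obj :: "('o, 'm) cat \<Rightarrow> 'o \<Rightarrow> bool" where
  "is_zero_obj C z \<longleftrightarrow>
     (\<forall>a. \<exists>!f. cdom C f = z \<and> ccod C f = a) \<and>
     (\<forall>a. \<exists>!f. cdom C f = a \<and> ccod C f = z)"

definition zero_mor :: "('o, 'm) cat \<Rightarrow> 'm \<Rightarrow> bool" where
  "zero_mor C f \<longleftrightarrow>
     (\<exists>z u v. is_zero_obj C z \<and> cdom C u = cdom C f \<and> ccod C u = z \<and>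
              cdom C v = z \<and> ccod C v = ccod C f \<and> f = ccomp C v u)"

definition is_kernel :: "('o, 'm) cat \<Rightarrow> 'm \<Rightarrow> 'm \<Rightarrow> bool" where
  "is_kernel C k f \<longleftrightarrow>
     ccod C k = cdom C f \<and> zero_mor C (ccomp C f k) \<and>
     (\<forall>h. ccod C h = cdom C f \<and> zero_mor C (ccomp C f h) \<longrightarrow>
        (\<exists>!u. cdom C u = cdom C h \<and> ccod C u = cdom C k \<and> ccomp C k u = h))"

definition is_cokernel :: "('o, 'm) cat \<Rightarrow> 'm \<Rightarrow> 'm \<Rightarrow> bool" where
  "is_cokernel C q f \<longleftrightarrow>
     cdom C q = ccod C f \<and> zero_mor C (ccomp C q f) \<and>
     (\<forall>h. cdom C h = ccod C f \<and> zero_mor C (ccomp C h f) \<longrightarrow>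
        (\<exists>!u. cdom C u = ccod C q \<and> ccod C u = ccod C h \<and> ccomp C u q = h))"

definition mono :: "('o, 'm) cat \<Rightarrow> 'm \<Rightarrow> bool" where
  "mono C f \<longleftrightarrow>
     (\<forall>g h. ccod C g = cdom C f \<and> ccod C h = cdom C f \<and> cdom C g = cdom C h \<and>
        ccomp C f g = ccomp C f h \<longrightarrow> g = h)"

definition epi :: "('o, 'm) cat \<Rightarrow> 'm \<Rightarrow> bool" where
  "epi C f \<longleftrightarrow>
     (\<forall>g h. cdom C g = ccod C f \<and> cdom C h = ccod C f \<and> ccod C g = ccod C h \<and>
        ccomp C g f = ccomp C h f \<longrightarrow> g = h)"

definition has_product :: "('o, 'm) cat \<Rightarrow> 'o \<Rightarrow> 'o \<Rightarrow> bool" where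
  "has_product C a b \<longleftrightarrow>
     (\<exists>p p1 p2. cdom C p1 = p \<and> ccod C p1 = a \<and> cdom C p2 = p \<and> ccod C p2 = b \<and>
        (\<forall>f g. cdom C f = cdom C g \<and> ccod C f = a \<and> ccod C g = b \<longrightarrow>
           (\<exists>!u. cdom C u = cdom C f \<and> ccod C u = p \<and>
                 ccomp C p1 u = f \<and> ccomp C p2 u = g)))"

definition has_coproduct :: "('o, 'm) cat \<Rightarrow> 'o \<Rightarrow> 'o \<Rightarrow> bool" where
  "has_coproduct C a b \<longleftrightarrow>
     (\<exists>p i1 i2. ccod C i1 = p \<and> cdom C i1 = a \<and> ccod C i2 = p \<and> cdom C i2 = b \<and>
        (\<forall>f g. ccod C f = ccod C g \<and> cdom C f = a \<and> cdom C g = b \<longrightarrow>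
           (\<exists>!u. ccod C u = ccod C f \<and> cdom C u = p \<and>
                 ccomp C u i1 = f \<and> ccomp C u i2 = g)))"

definition abelian_category :: "('o, 'm) cat \<Rightarrow> bool" where
  "abelian_category C \<longleftrightarrow>
     category C \<and> (\<exists>z. is_zero_obj C z) \<and>
     (\<forall>a b. has_product C a b \<and> has_coproduct C a b) \<and>
     (\<forall>f. \<exists>k. is_kernel C k f) \<and> (\<forall>f. \<exists>q. is_cokernel C q f) \<and>
     (\<forall>f. mono C f \<longrightarrow> (\<exists>g. is_kernel C f g)) \<and>
     (\<forall>f. epi C f \<longrightarrow> (\<exists>g. is_cokernel C f g))"

definition short_exact :: "('o, 'm) cat \<Rightarrow> 'm \<Rightarrow> 'm \<Rightarrow> bool" where
  "short_exact C f g \<longleftrightarrow> is_kernel C f g \<and> is_cokernel C g f"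

definition amplitude :: "('o, 'm) cat \<Rightarrow> ('o \<Rightarrow> ereal) \<Rightarrow> bool" where
  "amplitude C \<alpha> \<longleftrightarrow>
     (\<forall>a. 0 \<le> \<alpha> a) \<and>
     (\<forall>z. is_zero_obj C z \<longrightarrow> \<alpha> z = 0) \<and>
     (\<forall>f g. short_exact C f g \<longrightarrow>
        \<alpha> (cdom C f) \<le> \<alpha> (cdom C g) \<and> \<alpha> (ccod C g) \<le> \<alpha> (cdom C g) \<and>
        \<alpha> (cdom C g) \<le> \<alpha> (cdom C f) + \<alpha> (ccod C g))"

text \<open>The kernel / cokernel object of a morphism (a chosen one; well defined up to iso).\<close>
definition ker_obj :: "('o, 'm) cat \<Rightarrow> 'm \<Rightarrow> 'o" where
  "ker_obj C f = cdom C (SOME k. is_kernel C k f)"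

definition coker_obj :: "('o, 'm) cat \<Rightarrow> 'm \<Rightarrow> 'o" where
  "coker_obj C f = ccod C (SOME q. is_cokernel C q f)"

text \<open>A zigzag from A to B: a list of morphisms, each tagged True if it points forward
  (from the current object) and False if it points backward (into the current object).\<close>
fun zigzag :: "('o, 'm) cat \<Rightarrow> 'o \<Rightarrow> (bool \<times> 'm) list \<Rightarrow> 'o \<Rightarrow> bool" where
  "zigzag C A [] B \<longleftrightarrow> A = B"
| "zigzag C A ((True, g) # gs) B \<longleftrightarrow> cdom C g = A \<and> zigzag C (ccod C g) gs B"
| "zigzag C A ((False, g) # gs) B \<longleftrightarrow> ccod C g = A \<and> zigzag C (cdom C g) gs B"

definition zz_cost :: "('o, 'm) cat \<Rightarrow> ('o \<Rightarrow> ereal) \<Rightarrow> (bool \<times> 'm) list \<Rightarrow> ereal" where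
  "zz_cost C \<alpha> gs = sum_list (map (\<lambda>(_, g). \<alpha> (ker_obj C g) + \<alpha> (coker_obj C g)) gs)"

text \<open>Path metric: infimum of costs of zigzags (Inf of the empty set is \<infinity>).\<close>
definition path_dist :: "('o, 'm) cat \<Rightarrow> ('o \<Rightarrow> ereal) \<Rightarrow> 'o \<Rightarrow> 'o \<Rightarrow> ereal" where
  "path_dist C \<alpha> A B = Inf {zz_cost C \<alpha> gs | gs. zigzag C A gs B}"

end

theory Submission
  imports Defs
begin

locale abcat =
  fixes C :: "('o, 'm) cat"
  assumes ab: "abelian_category C"
begin

lemma cat: "category C" using ab unfolding abelian_category_def by blast

lemma id_dom[simp]: "cdom C (cid C a) = a" and id_cod[simp]: "ccod C (cid C a) = a"
  using cat unfolding category_def by blast+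

lemma comp_dom[simp]: "cdom C g = ccod C f \<Longrightarrow> cdom C (ccomp C g f) = cdom C f"
  and comp_cod[simp]: "cdom C g = ccod C f \<Longrightarrow> ccod C (ccomp C g f) = ccod C g"
  using cat unfolding category_def by blast+

lemma comp_id: "ccomp C f (cid C (cdom C f)) = f" and id_comp: "ccomp C (cid C (ccod C f)) f = f"
  using cat unfolding category_def by blast+

lemma assoc: "ccod C f = cdom C g \<Longrightarrow> cdom C h = ccod C g \<Longrightarrow>
   ccomp C h (ccomp C g f) = ccomp C (ccomp C h g) f"
  using cat unfolding category_def by (metis (no_types))

lemma zero_left:
  assumes "zero_mor C f" "ccod C h = cdom C f"
  shows "zero_mor C (ccomp C f h)"
proof -
  obtain z u v where z: "is_zero_obj C z" "cdom C u = cdom C f" "ccod C u = z"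
    "cdom C v = z" "ccod C v = ccod C f" "f = ccomp C v u"
    using assms(1) unfolding zero_mor_def by blast
  have "ccomp C f h = ccomp C v (ccomp C u h)" using z assms(2) assoc[of h u v] by simp
  moreover have "cdom C (ccomp C u h) = cdom C h" "ccod C (ccomp C u h) = z"
    using z assms by simp_all
  moreover have "cdom C h = cdom C (ccomp C f h)" "ccod C v = ccod C (ccomp C f h)"
    using z assms by simp_all
  ultimately show ?thesis unfolding zero_mor_def using z by metis
qed

lemma zero_right:
  assumes "zero_mor C f" "cdom C g = ccod C f"
  shows "zero_mor C (ccomp C g f)"
proof -
  obtain z u v where z: "is_zero_obj C z" "cdom C u = cdom C f" "ccod C u = z"
    "cdom C v = z" "ccod C v = ccod C f" "f = ccomp C v u"
    using assms(1) unfolding zero_mor_def by blast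
  have "ccomp C g f = ccomp C (ccomp C g v) u" using z assms(2) assoc[of u v g] by simp
  moreover have "cdom C (ccomp C g v) = z" "ccod C (ccomp C g v) = ccod C g"
    using z assms by simp_all
  moreover have "cdom C u = cdom C (ccomp C g f)" "ccod C g = ccod C (ccomp C g f)"
    using z assms by simp_all
  ultimately show ?thesis unfolding zero_mor_def using z by metis
qed

lemma mono_zero:
  assumes m: "Defs.mono C m" and d: "cdom C m = ccod C x" and zx: "zero_mor C (ccomp C m x)"
  shows "zero_mor C x"
proof -
  obtain z u v where z: "is_zero_obj C z" "cdom C u = cdom C x" "ccod C u = z"
    "cdom C v = z" "ccod C v = ccod C m" "ccomp C m x = ccomp C v u"
    using zx d unfolding zero_mor_def by auto
  obtain v' where v': "cdom C v' = z" "ccod C v' = ccod C x"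
    using z(1) unfolding is_zero_obj_def by blast
  have "ccomp C m v' = v"
  proof -
    have "\<exists>!f. cdom C f = z \<and> ccod C f = ccod C m" using z(1) unfolding is_zero_obj_def by blast
    moreover have "cdom C (ccomp C m v') = z" "ccod C (ccomp C m v') = ccod C m"
      using v' d by simp_all
    ultimately show ?thesis using z by blast
  qed
  hence "ccomp C m (ccomp C v' u) = ccomp C m x"
    using assoc[of u v' m] v' d z by simp
  moreover have "ccod C (ccomp C v' u) = cdom C m" "cdom C (ccomp C v' u) = cdom C x"
    using v' d z by simp_all
  ultimately have "ccomp C v' u = x" using m d unfolding Defs.mono_def by metis
  thus ?thesis unfolding zero_mor_def using z v' by metis
qed

lemma kernel_mono:
  assumes k: "is_kernel C k f" shows "Defs.mono C k"
  unfolding Defs.mono_def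
proof (intro allI impI)
  fix g h assume a: "ccod C g = cdom C k \<and> ccod C h = cdom C k \<and> cdom C g = cdom C h \<and>
        ccomp C k g = ccomp C k h"
  let ?h0 = "ccomp C k g"
  have c: "ccod C ?h0 = cdom C f" using a k unfolding is_kernel_def by simp
  have "ccomp C f ?h0 = ccomp C (ccomp C f k) g" using assoc[of g k f] a k
    unfolding is_kernel_def by simp
  hence "zero_mor C (ccomp C f ?h0)" using zero_left[of "ccomp C f k" g] a k
    unfolding is_kernel_def by simp
  hence "\<exists>!u. cdom C u = cdom C ?h0 \<and> ccod C u = cdom C k \<and> ccomp C k u = ?h0"
    using k c unfolding is_kernel_def by blast
  moreover have "cdom C ?h0 = cdom C g" using a by simp
  ultimately show "g = h" using a by metis
qed

lemma mono_comp:
  assumes "Defs.mono C a" "Defs.mono C b" "cdom C a = ccod C b"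
  shows "Defs.mono C (ccomp C a b)"
  unfolding Defs.mono_def
proof (intro allI impI)
  fix g h assume h: "ccod C g = cdom C (ccomp C a b) \<and> ccod C h = cdom C (ccomp C a b) \<and>
     cdom C g = cdom C h \<and> ccomp C (ccomp C a b) g = ccomp C (ccomp C a b) h"
  hence g: "ccod C g = cdom C b" "ccod C h = cdom C b" using assms by simp_all
  have "ccomp C a (ccomp C b g) = ccomp C a (ccomp C b h)"
    using h g assoc[of g b a] assoc[of h b a] assms(3) by simp
  hence "ccomp C b g = ccomp C b h" using assms g h unfolding Defs.mono_def
    by (metis comp_cod comp_dom)
  thus "g = h" using assms g h unfolding Defs.mono_def by metis
qed

lemma idl: "ccod C a = Z \<Longrightarrow> ccomp C (cid C Z) a = a" using id_comp by metis
lemma idr: "cdom C a = Z \<Longrightarrow> ccomp C a (cid C Z) = a" using comp_id by metis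

lemma key_epi:
  assumes q: "is_cokernel C q f" and m: "is_kernel C m q"
    and e: "ccomp C m e = f" "cdom C e = cdom C f" "ccod C e = cdom C m"
  shows "epi C e"
  unfolding epi_def
proof (intro allI impI)
  fix y1 y2 assume y: "cdom C y1 = ccod C e \<and> cdom C y2 = ccod C e \<and> ccod C y1 = ccod C y2 \<and>
        ccomp C y1 e = ccomp C y2 e"
  define Z where "Z = ccod C y1"
  define I where "I = cdom C m"
  have yy: "cdom C y1 = I" "ccod C y1 = Z" "cdom C y2 = I" "ccod C y2 = Z" "ccomp C y1 e = ccomp C y2 e"
    using y e unfolding I_def Z_def by auto
  have eI: "ccod C e = I" using e I_def by simp
  have mm: "Defs.mono C m" using kernel_mono m by blast
  have mq: "ccod C m = cdom C q" "zero_mor C (ccomp C q m)" using m unfolding is_kernel_def by auto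
  have qf: "cdom C q = ccod C f" using q unfolding is_cokernel_def by auto
  obtain P p1 p2 where P: "cdom C p1 = P" "ccod C p1 = Z" "cdom C p2 = P" "ccod C p2 = Z"
    "\<forall>f g. cdom C f = cdom C g \<and> ccod C f = Z \<and> ccod C g = Z \<longrightarrow>
           (\<exists>!u. cdom C u = cdom C f \<and> ccod C u = P \<and> ccomp C p1 u = f \<and> ccomp C p2 u = g)"
  proof -
    have "has_product C Z Z" using ab unfolding abelian_category_def by blast
    thus ?thesis unfolding has_product_def using that by blast
  qed
  obtain D where D: "cdom C D = Z" "ccod C D = P" "ccomp C p1 D = cid C Z" "ccomp C p2 D = cid C Z"
    using P(5) by (metis id_cod id_dom)
  have Dm: "Defs.mono C D" unfolding Defs.mono_def
  proof (intro allI impI)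
    fix a b assume ab': "ccod C a = cdom C D \<and> ccod C b = cdom C D \<and> cdom C a = cdom C b \<and>
        ccomp C D a = ccomp C D b"
    have "a = ccomp C (ccomp C p1 D) a" using D(3) ab' D(1) idl[of _ Z] by simp
    also have "\<dots> = ccomp C p1 (ccomp C D a)" using assoc[of a D p1] ab' D P by simp
    also have "\<dots> = ccomp C p1 (ccomp C D b)" using ab' by simp
    also have "\<dots> = ccomp C (ccomp C p1 D) b" using assoc[of b D p1] ab' D P by simp
    also have "\<dots> = b" using D(3) ab' D(1) idl[of _ Z] by simp
    finally show "a = b" .
  qed
  then obtain \<sigma> where sig: "is_kernel C D \<sigma>" using ab unfolding abelian_category_def by blast
  have sD: "cdom C \<sigma> = P" "zero_mor C (ccomp C \<sigma> D)" using sig D unfolding is_kernel_def by auto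
  have sigU: "\<And>h. ccod C h = P \<Longrightarrow> zero_mor C (ccomp C \<sigma> h) \<Longrightarrow>
        (\<exists>!u. cdom C u = cdom C h \<and> ccod C u = Z \<and> ccomp C D u = h)"
    using sig sD D unfolding is_kernel_def by auto
  obtain d where d: "cdom C d = I" "ccod C d = P" "ccomp C p1 d = y1" "ccomp C p2 d = y2"
    using P(5) yy by metis
  define s where "s = ccomp C \<sigma> d"
  have s: "cdom C s = I" unfolding s_def using d sD by simp
  obtain ke where ke: "is_kernel C ke s" using ab unfolding abelian_category_def by blast
  have kec: "ccod C ke = I" "zero_mor C (ccomp C s ke)" using ke s unfolding is_kernel_def by auto
  have keU: "\<And>h. ccod C h = I \<Longrightarrow> zero_mor C (ccomp C s h) \<Longrightarrow>
        (\<exists>!u. cdom C u = cdom C h \<and> ccod C u = cdom C ke \<and> ccomp C ke u = h)"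
    using ke s unfolding is_kernel_def by auto
  have kem: "Defs.mono C ke" using kernel_mono ke by blast
  have "ccomp C s ke = ccomp C \<sigma> (ccomp C d ke)" unfolding s_def
    using assoc[of ke d \<sigma>] d kec sD by simp
  moreover have "ccod C (ccomp C d ke) = P" using d kec sD by simp
  ultimately obtain w where w: "ccod C w = Z" "ccomp C D w = ccomp C d ke"
    using sigU kec by metis
  have w1: "ccomp C y1 ke = w"
  proof -
    have "ccomp C y1 ke = ccomp C p1 (ccomp C d ke)" using d(3) assoc[of ke d p1] d kec P by simp
    also have "\<dots> = ccomp C p1 (ccomp C D w)" using w by simp
    also have "\<dots> = ccomp C (ccomp C p1 D) w" using assoc[of w D p1] w D P by simp
    also have "\<dots> = w" using D(3) w idl[of _ Z] by simp
    finally show ?thesis .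
  qed
  have w2: "ccomp C y2 ke = w"
  proof -
    have "ccomp C y2 ke = ccomp C p2 (ccomp C d ke)" using d(4) assoc[of ke d p2] d kec P by simp
    also have "\<dots> = ccomp C p2 (ccomp C D w)" using w by simp
    also have "\<dots> = ccomp C (ccomp C p2 D) w" using assoc[of w D p2] w D P by simp
    also have "\<dots> = w" using D(4) w idl[of _ Z] by simp
    finally show ?thesis .
  qed
  have de: "ccomp C d e = ccomp C D (ccomp C y1 e)"
  proof -
    have "\<exists>!u. cdom C u = cdom C (ccomp C y1 e) \<and> ccod C u = P \<and>
       ccomp C p1 u = ccomp C y1 e \<and> ccomp C p2 u = ccomp C y2 e"
      apply (rule P(5)[rule_format]) using yy eI by simp
    moreover have "cdom C (ccomp C d e) = cdom C (ccomp C y1 e) \<and> ccod C (ccomp C d e) = P \<and>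
      ccomp C p1 (ccomp C d e) = ccomp C y1 e \<and> ccomp C p2 (ccomp C d e) = ccomp C y2 e"
      using d eI yy assoc[of e d p1] assoc[of e d p2] P by auto
    moreover have "cdom C (ccomp C D (ccomp C y1 e)) = cdom C (ccomp C y1 e) \<and>
      ccod C (ccomp C D (ccomp C y1 e)) = P \<and>
      ccomp C p1 (ccomp C D (ccomp C y1 e)) = ccomp C y1 e \<and>
      ccomp C p2 (ccomp C D (ccomp C y1 e)) = ccomp C y2 e"
      using D yy eI P assoc[of "ccomp C y1 e" D p1] assoc[of "ccomp C y1 e" D p2] idl[of _ Z] by auto
    ultimately show ?thesis by blast
  qed
  have "ccomp C s e = ccomp C \<sigma> (ccomp C d e)"
    unfolding s_def using assoc[of e d \<sigma>] d sD eI by simp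
  also have "\<dots> = ccomp C (ccomp C \<sigma> D) (ccomp C y1 e)"
    using de assoc[of "ccomp C y1 e" D \<sigma>] D sD eI yy by simp
  finally have "zero_mor C (ccomp C s e)" using zero_left[OF sD(2)] sD(1) D yy eI by simp
  then obtain v where v: "cdom C v = cdom C e" "ccod C v = cdom C ke" "ccomp C ke v = e"
    using keU[OF eI] by blast
  have mke: "cdom C m = ccod C ke" using kec I_def by simp
  have "ccomp C m (ccomp C ke v) = ccomp C (ccomp C m ke) v" by (rule assoc) (simp_all add: v mke)
  hence fv: "f = ccomp C (ccomp C m ke) v" unfolding v(3) e(1) .
  have mk: "Defs.mono C (ccomp C m ke)" using mono_comp[OF mm kem mke] .
  then obtain g where g: "is_kernel C (ccomp C m ke) g" using ab unfolding abelian_category_def by blast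
  have gc: "ccod C m = cdom C g" "zero_mor C (ccomp C g (ccomp C m ke))"
  proof -
    have "ccod C (ccomp C m ke) = cdom C g \<and> zero_mor C (ccomp C g (ccomp C m ke))"
      using g unfolding is_kernel_def by blast
    thus "ccod C m = cdom C g" "zero_mor C (ccomp C g (ccomp C m ke))" using kec I_def by simp_all
  qed
  have gU0: "\<forall>h. ccod C h = cdom C g \<and> zero_mor C (ccomp C g h) \<longrightarrow>
        (\<exists>!u. cdom C u = cdom C h \<and> ccod C u = cdom C (ccomp C m ke) \<and> ccomp C (ccomp C m ke) u = h)"
    using g unfolding is_kernel_def by blast
  have mkd: "cdom C (ccomp C m ke) = cdom C ke" using kec I_def by simp
  have gU: "\<And>h. ccod C h = cdom C g \<Longrightarrow> zero_mor C (ccomp C g h) \<Longrightarrow>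
        (\<exists>!u. cdom C u = cdom C h \<and> ccod C u = cdom C ke \<and> ccomp C (ccomp C m ke) u = h)"
    using gU0 unfolding mkd by blast
  have "ccomp C g f = ccomp C (ccomp C g (ccomp C m ke)) v"
    using fv assoc[of v "ccomp C m ke" g] gc v kec I_def by simp
  hence "zero_mor C (ccomp C g f)"
    using zero_left[OF gc(2)] gc(1) v kec I_def by simp
  moreover have "cdom C g = ccod C f" using gc e eI by (metis comp_cod)
  moreover have "\<forall>h. cdom C h = ccod C f \<and> zero_mor C (ccomp C h f) \<longrightarrow>
        (\<exists>!u. cdom C u = ccod C q \<and> ccod C u = ccod C h \<and> ccomp C u q = h)"
    using q unfolding is_cokernel_def by blast
  ultimately obtain g' where g': "cdom C g' = ccod C q" "ccomp C g' q = g"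
    by blast
  have "ccomp C g m = ccomp C g' (ccomp C q m)"
    using g' assoc[of m q g'] mq by simp
  hence "zero_mor C (ccomp C g m)"
    using zero_right[OF mq(2)] g' mq by simp
  then obtain u where u: "cdom C u = I" "ccod C u = cdom C ke" "ccomp C (ccomp C m ke) u = m"
    using gU gc I_def by metis
  have "ccomp C m (ccomp C ke u) = m"
    using u assoc[of u ke m] kec I_def by simp
  also have "\<dots> = ccomp C m (cid C I)" using idr[of _ I] I_def by simp
  finally have "ccomp C m (ccomp C ke u) = ccomp C m (cid C I)" .
  moreover have "ccod C (ccomp C ke u) = cdom C m" "cdom C (ccomp C ke u) = I"
    using u kec I_def by simp_all
  ultimately have kid: "ccomp C ke u = cid C I"
    using mm unfolding Defs.mono_def I_def by (metis id_cod id_dom)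
  have "y1 = ccomp C y1 (ccomp C ke u)" using kid idr[of _ I] yy by simp
  also have "\<dots> = ccomp C w u" using assoc[of u ke y1] u kec yy w1 by simp
  also have "\<dots> = ccomp C y2 (ccomp C ke u)" using assoc[of u ke y2] u kec yy w2 by simp
  also have "\<dots> = y2" using kid idr[of _ I] yy by simp
  finally show "y1 = y2" .
qed

lemma ereal_aux:
  fixes X Y K Q I :: ereal
  assumes "X \<le> K + I" "I \<le> Y" "0 \<le> Q"
  shows "X \<le> Y + (K + Q)"
proof -
  have "K + I \<le> K + Y" using assms(2) by (rule add_left_mono)
  also have "\<dots> \<le> K + Y + Q" using assms(3) by (simp add: add_increasing2)
  finally show ?thesis using assms(1) by (simp add: ac_simps)
qed

lemma morph_ineq:
  assumes amp: "amplitude C \<alpha>"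
  shows "\<alpha> (cdom C f) \<le> \<alpha> (ccod C f) + (\<alpha> (ker_obj C f) + \<alpha> (coker_obj C f)) \<and>
         \<alpha> (ccod C f) \<le> \<alpha> (cdom C f) + (\<alpha> (ker_obj C f) + \<alpha> (coker_obj C f))"
proof -
  define k where "k = (SOME k. is_kernel C k f)"
  define q where "q = (SOME q. is_cokernel C q f)"
  have k: "is_kernel C k f" unfolding k_def
    by (rule someI_ex) (use ab in \<open>unfold abelian_category_def, blast\<close>)
  have q: "is_cokernel C q f" unfolding q_def
    by (rule someI_ex) (use ab in \<open>unfold abelian_category_def, blast\<close>)
  obtain m where m: "is_kernel C m q" using ab unfolding abelian_category_def by blast
  have kc: "ccod C k = cdom C f" "zero_mor C (ccomp C f k)" using k unfolding is_kernel_def by blast+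
  have kU: "\<forall>h. ccod C h = cdom C f \<and> zero_mor C (ccomp C f h) \<longrightarrow>
        (\<exists>!u. cdom C u = cdom C h \<and> ccod C u = cdom C k \<and> ccomp C k u = h)"
    using k unfolding is_kernel_def by blast
  have qc: "cdom C q = ccod C f" "zero_mor C (ccomp C q f)" using q unfolding is_cokernel_def by blast+
  have qU: "\<forall>h. cdom C h = ccod C f \<and> zero_mor C (ccomp C h f) \<longrightarrow>
        (\<exists>!u. cdom C u = ccod C q \<and> ccod C u = ccod C h \<and> ccomp C u q = h)"
    using q unfolding is_cokernel_def by blast
  have mc: "ccod C m = cdom C q" "zero_mor C (ccomp C q m)" using m unfolding is_kernel_def by blast+
  have mU: "\<forall>h. ccod C h = cdom C q \<and> zero_mor C (ccomp C q h) \<longrightarrow>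
        (\<exists>!u. cdom C u = cdom C h \<and> ccod C u = cdom C m \<and> ccomp C m u = h)"
    using m unfolding is_kernel_def by blast
  have mm: "Defs.mono C m" using kernel_mono m by blast
  obtain e where e: "cdom C e = cdom C f" "ccod C e = cdom C m" "ccomp C m e = f"
  proof -
    have "\<exists>!u. cdom C u = cdom C f \<and> ccod C u = cdom C m \<and> ccomp C m u = f"
      using mU qc by simp
    thus ?thesis using that by blast
  qed
  have ep: "epi C e" using key_epi[OF q m e(3) e(1) e(2)] .
  have "ccomp C m (ccomp C e k) = ccomp C f k" using assoc[of k e m] e kc by simp
  hence ek: "zero_mor C (ccomp C e k)" using mono_zero[OF mm] kc e by simp
  have ke: "is_kernel C k e" unfolding is_kernel_def
  proof (intro conjI allI impI)
    show "ccod C k = cdom C e" using kc e by simp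
    show "zero_mor C (ccomp C e k)" by (rule ek)
    fix h assume h: "ccod C h = cdom C e \<and> zero_mor C (ccomp C e h)"
    have "ccomp C f h = ccomp C m (ccomp C e h)" using assoc[of h e m] e h by simp
    hence "zero_mor C (ccomp C f h)" using zero_right[of "ccomp C e h" m] h e by simp
    thus "\<exists>!u. cdom C u = cdom C h \<and> ccod C u = cdom C k \<and> ccomp C k u = h"
      using kU h e by simp
  qed
  obtain g0 where g0: "is_cokernel C e g0" using ep ab unfolding abelian_category_def by blast
  have g0c: "cdom C e = ccod C g0" "zero_mor C (ccomp C e g0)" using g0 unfolding is_cokernel_def by blast+
  have g0U: "\<forall>h. cdom C h = ccod C g0 \<and> zero_mor C (ccomp C h g0) \<longrightarrow>
        (\<exists>!u. cdom C u = ccod C e \<and> ccod C u = ccod C h \<and> ccomp C u e = h)"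
    using g0 unfolding is_cokernel_def by blast
  have keU: "\<forall>h. ccod C h = cdom C e \<and> zero_mor C (ccomp C e h) \<longrightarrow>
        (\<exists>!u. cdom C u = cdom C h \<and> ccod C u = cdom C k \<and> ccomp C k u = h)"
    using ke unfolding is_kernel_def by blast
  obtain u0 where u0: "ccod C u0 = cdom C k" "ccomp C k u0 = g0" using keU g0c by metis
  have ce: "is_cokernel C e k" unfolding is_cokernel_def
  proof (intro conjI allI impI)
    show "cdom C e = ccod C k" using kc e by simp
    show "zero_mor C (ccomp C e k)" by (rule ek)
    fix h assume h: "cdom C h = ccod C k \<and> zero_mor C (ccomp C h k)"
    have "ccomp C h g0 = ccomp C (ccomp C h k) u0" using assoc[of u0 k h] u0 h by simp
    hence "zero_mor C (ccomp C h g0)" using zero_left[of "ccomp C h k" u0] h u0 kc by simp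
    moreover have "cdom C h = ccod C g0" using h g0c kc e by simp
    ultimately show "\<exists>!u. cdom C u = ccod C e \<and> ccod C u = ccod C h \<and> ccomp C u e = h"
      using g0U by blast
  qed
  have cq: "is_cokernel C q m" unfolding is_cokernel_def
  proof (intro conjI allI impI)
    show "cdom C q = ccod C m" using mc by simp
    show "zero_mor C (ccomp C q m)" by (rule mc(2))
    fix h assume h: "cdom C h = ccod C m \<and> zero_mor C (ccomp C h m)"
    have "ccomp C h f = ccomp C (ccomp C h m) e" using assoc[of e m h] e h by simp
    hence "zero_mor C (ccomp C h f)" using zero_left[of "ccomp C h m" e] h e by simp
    moreover have "cdom C h = ccod C f" using h mc qc by simp
    ultimately show "\<exists>!u. cdom C u = ccod C q \<and> ccod C u = ccod C h \<and> ccomp C u q = h"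
      using qU by blast
  qed
  have s1: "short_exact C k e" unfolding short_exact_def using ke ce by blast
  have s2: "short_exact C m q" unfolding short_exact_def using m cq by blast
  have A1: "\<alpha> (cdom C e) \<le> \<alpha> (cdom C k) + \<alpha> (ccod C e)" "\<alpha> (ccod C e) \<le> \<alpha> (cdom C e)"
    using amp s1 unfolding amplitude_def by blast+
  have A2: "\<alpha> (cdom C m) \<le> \<alpha> (cdom C q)" "\<alpha> (cdom C q) \<le> \<alpha> (cdom C m) + \<alpha> (ccod C q)"
    using amp s2 unfolding amplitude_def by blast+
  have nn: "\<And>a. 0 \<le> \<alpha> a" using amp unfolding amplitude_def by blast
  have KO: "ker_obj C f = cdom C k" unfolding ker_obj_def k_def ..
  have QO: "coker_obj C f = ccod C q" unfolding coker_obj_def q_def ..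
  have X1: "\<alpha> (cdom C f) \<le> \<alpha> (cdom C k) + \<alpha> (cdom C m)" "\<alpha> (cdom C m) \<le> \<alpha> (ccod C f)"
    using A1 A2 e qc by simp_all
  have X2: "\<alpha> (ccod C f) \<le> \<alpha> (ccod C q) + \<alpha> (cdom C m)" "\<alpha> (cdom C m) \<le> \<alpha> (cdom C f)"
    using A1 A2 e qc by (simp_all add: ac_simps)
  show ?thesis unfolding KO QO
    using ereal_aux[OF X1 nn[of "ccod C q"]] ereal_aux[OF X2 nn[of "cdom C k"]] by (simp add: ac_simps)
qed

lemma zz_ineq:
  assumes amp: "amplitude C \<alpha>"
  shows "zigzag C A gs B \<Longrightarrow> \<alpha> A \<le> \<alpha> B + zz_cost C \<alpha> gs \<and> \<alpha> B \<le> \<alpha> A + zz_cost C \<alpha> gs"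
proof (induction gs arbitrary: A)
  case Nil
  thus ?case by (simp add: zz_cost_def)
next
  case (Cons bg gs)
  obtain b g where bg: "bg = (b, g)" by force
  define c where "c = \<alpha> (ker_obj C g) + \<alpha> (coker_obj C g)"
  have cost: "zz_cost C \<alpha> (bg # gs) = c + zz_cost C \<alpha> gs"
    unfolding zz_cost_def c_def bg by simp
  have M: "\<alpha> (cdom C g) \<le> \<alpha> (ccod C g) + c \<and> \<alpha> (ccod C g) \<le> \<alpha> (cdom C g) + c"
    using morph_ineq[OF amp, of g] unfolding c_def .
  show ?case
  proof (cases b)
    case True
    hence z: "cdom C g = A" "zigzag C (ccod C g) gs B" using Cons.prems bg by auto
    have IH: "\<alpha> (ccod C g) \<le> \<alpha> B + zz_cost C \<alpha> gs \<and> \<alpha> B \<le> \<alpha> (ccod C g) + zz_cost C \<alpha> gs"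
      using Cons.IH z(2) .
    have 1: "\<alpha> A \<le> \<alpha> B + zz_cost C \<alpha> gs + c"
      using M IH z(1) add_right_mono[of "\<alpha> (ccod C g)" "\<alpha> B + zz_cost C \<alpha> gs" c] by auto
    have 2: "\<alpha> B \<le> \<alpha> A + c + zz_cost C \<alpha> gs"
      using M IH z(1) add_right_mono[of "\<alpha> (ccod C g)" "\<alpha> A + c" "zz_cost C \<alpha> gs"] by auto
    show ?thesis unfolding cost using 1 2 by (simp add: ac_simps)
  next
    case False
    hence z: "ccod C g = A" "zigzag C (cdom C g) gs B" using Cons.prems bg by auto
    have IH: "\<alpha> (cdom C g) \<le> \<alpha> B + zz_cost C \<alpha> gs \<and> \<alpha> B \<le> \<alpha> (cdom C g) + zz_cost C \<alpha> gs"
      using Cons.IH z(2) .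
    have 1: "\<alpha> A \<le> \<alpha> B + zz_cost C \<alpha> gs + c"
      using M IH z(1) add_right_mono[of "\<alpha> (cdom C g)" "\<alpha> B + zz_cost C \<alpha> gs" c] by auto
    have 2: "\<alpha> B \<le> \<alpha> A + c + zz_cost C \<alpha> gs"
      using M IH z(1) add_right_mono[of "\<alpha> (cdom C g)" "\<alpha> A + c" "zz_cost C \<alpha> gs"] by auto
    show ?thesis unfolding cost using 1 2 by (simp add: ac_simps)
  qed
qed

end

lemma zz_cost_nonneg:
  assumes "\<And>a. 0 \<le> \<alpha> a"
  shows "0 \<le> zz_cost C \<alpha> gs"
  unfolding zz_cost_def
  by (rule sum_list_nonneg) (auto simp: assms)

lemma ereal_Inf_bound:
  fixes a b :: ereal
  assumes b: "0 \<le> b" and S: "\<And>x. x \<in> S \<Longrightarrow> a \<le> b + x" and nn: "\<And>x. x \<in> S \<Longrightarrow> 0 \<le> x"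
  shows "a \<le> b + Inf S"
proof (cases "b = \<infinity>")
  case True
  have "0 \<le> Inf S" using nn by (rule Inf_greatest)
  thus ?thesis using True by simp
next
  case False
  hence fin: "\<bar>b\<bar> \<noteq> \<infinity>" using b by auto
  have f2: "b \<noteq> \<infinity>" "b \<noteq> -\<infinity>" using False b by auto
  have "\<And>x. x \<in> S \<Longrightarrow> a - b \<le> x" using S fin f2 by (simp add: ereal_minus_le_iff ac_simps)
  hence "a - b \<le> Inf S" by (rule Inf_greatest)
  thus ?thesis using fin f2 by (simp add: ereal_minus_le_iff ac_simps)
qed

theorem mainTheorem6:
  fixes C :: "('o, 'm) cat" and \<alpha> :: "'o \<Rightarrow> ereal" and A B :: 'o
  assumes "abelian_category C" and "amplitude C \<alpha>"
  shows "\<alpha> A \<le> \<alpha> B + path_dist C \<alpha> A B \<and> \<alpha> B \<le> \<alpha> A + path_dist C \<alpha> A B"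
proof -
  interpret abcat C using assms(1) by unfold_locales
  have nn: "\<And>a. 0 \<le> \<alpha> a" using assms(2) unfolding amplitude_def by blast
  let ?S = "{zz_cost C \<alpha> gs | gs. zigzag C A gs B}"
  have S1: "\<And>x. x \<in> ?S \<Longrightarrow> \<alpha> A \<le> \<alpha> B + x" using zz_ineq[OF assms(2)] by blast
  have S2: "\<And>x. x \<in> ?S \<Longrightarrow> \<alpha> B \<le> \<alpha> A + x" using zz_ineq[OF assms(2)] by blast
  have S3: "\<And>x. x \<in> ?S \<Longrightarrow> 0 \<le> x" using zz_cost_nonneg[where \<alpha>=\<alpha>, OF nn] by blast
  show ?thesis unfolding path_dist_def
    using ereal_Inf_bound[OF nn S1 S3] ereal_Inf_bound[OF nn S2 S3] by blast
qed

end
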